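(* Let $r\geq 2$, let $A$ be a nonnegative symmetric cubical $r$-matrix of order $n$, and let $p\geq r$ be real. Then $\eta^{(p)}(A)=\|A\|_p$.
   Context: A cubical $r$-matrix of order $n$ is a function $A$ on $[n]^r$ with values $a_{i_1,\ldots,i_r}$; it is symmetric if $a_{i_1,\ldots,i_r}$ is invariant under all permutations of the indices. For real symmetric $A$, $P_A(\mathbf{x})=\sum_{i_1,\ldots,i_r}a_{i_1,\ldots,i_r}x_{i_1}\cdots x_{i_r}$ for $\mathbf{x}\in\mathbb{R}^n$, and $\eta^{(p)}(A)=\max\{|P_A(\mathbf{x})|:\mathbf{x}\in\mathbb{R}^n,\ |\mathbf{x}|_p=1\}$. The linear form is $L_A(\mathbf{x}^{(1)},\ldots,\mathbf{x}^{(r)})=\sum a_{i_1,\ldots,i_r}\overline{x^{(1)}_{i_1}}\cdots\overline{x^{(r)}_{i_r}}$ for $\mathbf{x}^{(k)}\in\mathbb{C}^{n}$, and the spectral $p$-norm is $\|A\|_p=\max\{|L_A(\mathbf{x}^{(1)},\ldots,\mathbf{x}^{(r)})|:|\mathbf{x}^{(1)}|_p=\cdots=|\mathbf{x}^{(r)}|_p=1\}$, with $|\cdot|_p$ the $\ell^p$ norm. *)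

theory Defs
  imports "HOL-Analysis.Analysis" "HOL-Combinatorics.Permutations"
begin

text \<open>A cubical r-matrix of order n is a function on index tuples in [n]^r.
 Index tuples are lists of length r with entries in {0..<n} (0-based).\<close>

definition index_tuples :: "nat \<Rightarrow> nat \<Rightarrow> nat list set" where
  "index_tuples r n = {is. length is = r \<and> set is \<subseteq> {..<n}}"

definition symmetric_cubical :: "nat \<Rightarrow> nat \<Rightarrow> (nat list \<Rightarrow> 'a) \<Rightarrow> bool" where
  "symmetric_cubical r n A \<longleftrightarrow>
     (\<forall>is \<in> index_tuples r n. \<forall>\<sigma>. \<sigma> permutes {..<r} \<longrightarrow>
        A (map (\<lambda>k. is ! \<sigma> k) [0..<r]) = A is)"

definition lp_norm_real :: "real \<Rightarrow> nat \<Rightarrow> (nat \<Rightarrow> real) \<Rightarrow> real" where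
  "lp_norm_real p n x = (\<Sum>i<n. \<bar>x i\<bar> powr p) powr (1 / p)"

definition lp_norm_complex :: "real \<Rightarrow> nat \<Rightarrow> (nat \<Rightarrow> complex) \<Rightarrow> real" where
  "lp_norm_complex p n x = (\<Sum>i<n. cmod (x i) powr p) powr (1 / p)"

definition poly_form :: "nat \<Rightarrow> nat \<Rightarrow> (nat list \<Rightarrow> real) \<Rightarrow> (nat \<Rightarrow> real) \<Rightarrow> real" where
  "poly_form r n A x = (\<Sum>is \<in> index_tuples r n. A is * (\<Prod>k<r. x (is ! k)))"

definition linear_form :: "nat \<Rightarrow> nat \<Rightarrow> (nat list \<Rightarrow> real) \<Rightarrow> (nat \<Rightarrow> nat \<Rightarrow> complex) \<Rightarrow> complex" where
  "linear_form r n A xs =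
     (\<Sum>is \<in> index_tuples r n. complex_of_real (A is) * (\<Prod>k<r. cnj (xs k (is ! k))))"

definition eta :: "real \<Rightarrow> nat \<Rightarrow> nat \<Rightarrow> (nat list \<Rightarrow> real) \<Rightarrow> real" where
  "eta p r n A = (SUP x \<in> {x. lp_norm_real p n x = 1}. \<bar>poly_form r n A x\<bar>)"

definition spectral_norm :: "real \<Rightarrow> nat \<Rightarrow> nat \<Rightarrow> (nat list \<Rightarrow> real) \<Rightarrow> real" where
  "spectral_norm p r n A =
     (SUP xs \<in> {xs. \<forall>k<r. lp_norm_complex p n (xs k) = 1}. cmod (linear_form r n A xs))"

end

theory Submission imports Defs begin

lemma sum_shift_mod:
  fixes f :: "nat \<Rightarrow> 'b::comm_monoid_add"
  assumes "r > 0"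
  shows "(\<Sum>t<r. f ((j + t) mod r)) = (\<Sum>k<r. f k)"
proof (rule sum.reindex_bij_witness[where j = "\<lambda>t. (j + t) mod r" and i = "\<lambda>k. (k + (r - j mod r)) mod r"])
  fix t assume t: "t \<in> {..<r}"
  have "((j + t) mod r + (r - j mod r)) mod r = (j + t + (r - j mod r)) mod r"
    by (simp add: mod_add_left_eq)
  also have "j + t + (r - j mod r) = t + r + (j - j mod r)" using mod_less_eq_dividend[of j r] mod_less_divisor[OF assms, of j] by linarith
  also have "(t + r + (j - j mod r)) mod r = t"
    using t by (simp add: minus_mod_eq_mult_div)
  finally show "((j + t) mod r + (r - j mod r)) mod r = t" .
next
  fix k assume k: "k \<in> {..<r}"
  have "(j + (k + (r - j mod r)) mod r) mod r = (j + (k + (r - j mod r))) mod r"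
    by (simp add: mod_add_right_eq)
  also have "j + (k + (r - j mod r)) = k + r + (j - j mod r)" using mod_less_eq_dividend[of j r] mod_less_divisor[OF assms, of j] by linarith
  also have "(k + r + (j - j mod r)) mod r = k"
    using k by (simp add: minus_mod_eq_mult_div)
  finally show "(j + (k + (r - j mod r)) mod r) mod r = k" .
qed (use assms in auto)

lemma tangent_powr:
  fixes b r p :: real
  assumes "0 \<le> b" "0 < r" "r \<le> p"
  shows "b powr r \<le> 1 + (r/p) * (b powr p - 1)"
proof (cases "b = 0")
  case True
  then show ?thesis using assms by (simp add: field_simps)
next
  case False
  then have bp: "b powr p > 0" using assms by simp
  have "(b powr p) powr (r/p) * 1 powr (1 - r/p) \<le> (r/p) * b powr p + (1 - r/p) * 1"
    by (rule Youngs_inequality_0) (use assms bp in \<open>auto simp: field_simps\<close>)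
  moreover have "(b powr p) powr (r/p) = b powr r" using assms by (simp add: powr_powr)
  ultimately show ?thesis by (simp add: algebra_simps)
qed

lemma amgm_powr:
  fixes u :: "nat \<Rightarrow> real"
  assumes "r \<ge> 1" "\<And>j. j < r \<Longrightarrow> u j \<ge> 0"
  shows "(\<Prod>j<r. u j) \<le> (\<Sum>j<r. u j powr r) / r"
proof -
  have "(\<Prod>j<r. u j powr r) powr (1 / card {..<r}) \<le> (\<Sum>j<r. u j powr r / card {..<r})"
    by (rule arith_geom_mean) (use assms in \<open>auto simp: lessThan_empty_iff\<close>)
  moreover have "(\<Prod>j<r. u j powr r) = (\<Prod>j<r. u j) powr r"
    by (simp add: prod_powr_distrib)
  moreover have "((\<Prod>j<r. u j) powr r) powr (1 / r) = (\<Prod>j<r. u j)"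
  proof -
    have "(\<Prod>j<r. u j) \<ge> 0" using assms by (intro prod_nonneg) auto
    then show ?thesis using assms by (simp add: powr_powr)
  qed
  ultimately show ?thesis by (simp add: sum_divide_distrib)
qed

lemma core_ineq:
  fixes a :: "nat \<Rightarrow> nat \<Rightarrow> real" and p :: real
  assumes r: "r \<ge> 1" and p: "real r \<le> p" and nn: "\<And>k j. a k j \<ge> 0"
  shows "(\<Sum>t<r. \<Prod>j<r. a ((j+t) mod r) j) / r \<le> (\<Prod>j<r. ((\<Sum>k<r. a k j powr p) / r) powr (1/p))"
proof -
  define c where "c j = ((\<Sum>k<r. a k j powr p) / r) powr (1/p)" for j
  have c0: "c j \<ge> 0" for j by (simp add: c_def)
  have rpos: "r > 0" using r by simp
  have ppos: "p > 0" using p r by linarith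
  show ?thesis
  proof (cases "\<exists>j<r. c j = 0")
    case True
    then obtain j where j: "j<r" "c j = 0" by auto
    have "(\<Sum>k<r. a k j powr p) / r = 0" using j(2) by (simp add: c_def)
    hence s0: "(\<Sum>k<r. a k j powr p) = 0" using rpos by simp
    have az: "a k j = 0" if "k<r" for k
    proof -
      have "a k j powr p = 0"
        using s0 sum_nonneg_eq_0_iff[of "{..<r}" "\<lambda>k. a k j powr p"] that by auto
      thus ?thesis by simp
    qed
    have pz: "(\<Prod>j'<r. a ((j'+t) mod r) j') = 0" for t
    proof (rule prod_zero)
      show "\<exists>j'\<in>{..<r}. a ((j'+t) mod r) j' = 0"
        using j(1) az[of "(j+t) mod r"] rpos by auto
    qed simp
    have "(\<Sum>t<r. \<Prod>j<r. a ((j+t) mod r) j) = 0"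
      by (rule sum.neutral) (use pz in blast)
    hence "(\<Sum>t<r. \<Prod>j<r. a ((j+t) mod r) j) / r = 0" by simp
    moreover have "(\<Prod>j<r. ((\<Sum>k<r. a k j powr p) / r) powr (1/p)) \<ge> 0"
      by (intro prod_nonneg) auto
    ultimately show ?thesis by linarith
  next
    case False
    hence cpos: "c j > 0" if "j<r" for j using c0 that by (metis less_le)
    define b where "b k j = a k j / c j" for k j
    have bnn: "b k j \<ge> 0" for k j using nn c0 by (simp add: b_def)
    have cp: "c j powr p = (\<Sum>k<r. a k j powr p) / r" for j
    proof -
      have "(\<Sum>k<r. a k j powr p) \<ge> 0" by (simp add: sum_nonneg)
      thus ?thesis using ppos by (simp add: c_def powr_powr abs_of_nonneg)
    qed
    have bsum: "(\<Sum>k<r. b k j powr p) = r" if "j<r" for j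
    proof -
      have "(\<Sum>k<r. b k j powr p) = (\<Sum>k<r. a k j powr p / c j powr p)"
        using nn c0 by (simp add: b_def powr_divide)
      also have "\<dots> = (\<Sum>k<r. a k j powr p) / c j powr p" by (simp add: sum_divide_distrib)
      also have "\<dots> = r"
      proof -
        have "c j powr p > 0" using cpos[OF that] by simp
        hence "(\<Sum>k<r. a k j powr p) / r > 0" by (simp only: cp)
        hence "(\<Sum>k<r. a k j powr p) \<noteq> 0" by (metis div_0 less_irrefl)
        thus ?thesis using cp rpos by simp
      qed
      finally show ?thesis .
    qed
    have prod_eq: "(\<Prod>j<r. a ((j+t) mod r) j) = (\<Prod>j<r. c j) * (\<Prod>j<r. b ((j+t) mod r) j)" for t
    proof -
      have "(\<Prod>j<r. a ((j+t) mod r) j) = (\<Prod>j<r. c j * b ((j+t) mod r) j)"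
      proof (intro prod.cong refl)
        fix j assume "j \<in> {..<r}"
        then have "c j \<noteq> 0" using cpos by force
        then show "a ((j+t) mod r) j = c j * b ((j+t) mod r) j" by (simp add: b_def)
      qed
      thus ?thesis by (simp add: prod.distrib)
    qed
    define s where "s = real r / p"
    have bound: "(\<Prod>j<r. b ((j+t) mod r) j) \<le> (\<Sum>j<r. 1 + s * (b ((j+t) mod r) j powr p - 1)) / r" for t
    proof -
      have "(\<Prod>j<r. b ((j+t) mod r) j) \<le> (\<Sum>j<r. b ((j+t) mod r) j powr r) / r"
        using r bnn by (intro amgm_powr) auto
      also have "\<dots> \<le> (\<Sum>j<r. 1 + s * (b ((j+t) mod r) j powr p - 1)) / r"
        unfolding s_def using bnn rpos p
        by (intro divide_right_mono sum_mono tangent_powr) auto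
      finally show ?thesis .
    qed
    have inner: "(\<Sum>t<r. 1 + s * (b ((j+t) mod r) j powr p - 1)) = r" if "j<r" for j
    proof -
      have "(\<Sum>t<r. 1 + s * (b ((j+t) mod r) j powr p - 1)) = (\<Sum>k<r. 1 + s * (b k j powr p - 1))"
        using sum_shift_mod[OF rpos, of "\<lambda>k. 1 + s * (b k j powr p - 1)" j] by simp
      also have "\<dots> = r + s * ((\<Sum>k<r. b k j powr p) - r)"
        by (simp add: sum.distrib sum_distrib_left[symmetric] sum_subtractf)
      also have "\<dots> = r" using bsum[OF that] by simp
      finally show ?thesis .
    qed
    have "(\<Sum>t<r. \<Prod>j<r. b ((j+t) mod r) j) \<le> (\<Sum>t<r. (\<Sum>j<r. 1 + s * (b ((j+t) mod r) j powr p - 1)) / r)"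
      by (intro sum_mono bound)
    also have "\<dots> = (\<Sum>t<r. \<Sum>j<r. 1 + s * (b ((j+t) mod r) j powr p - 1)) / r"
      by (simp only: sum_divide_distrib)
    also have "\<dots> = (\<Sum>j<r. \<Sum>t<r. 1 + s * (b ((j+t) mod r) j powr p - 1)) / r"
      by (rule arg_cong[where f="\<lambda>x. x / real r"], rule sum.swap)
    also have "\<dots> = (\<Sum>j<r. real r) / r" using inner by simp
    also have "\<dots> = r" using rpos by simp
    finally have key: "(\<Sum>t<r. \<Prod>j<r. b ((j+t) mod r) j) \<le> r" .
    have "(\<Sum>t<r. \<Prod>j<r. a ((j+t) mod r) j) / r = (\<Prod>j<r. c j) * ((\<Sum>t<r. \<Prod>j<r. b ((j+t) mod r) j) / r)"
      by (simp add: prod_eq sum_distrib_left[symmetric])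
    also have "\<dots> \<le> (\<Prod>j<r. c j) * 1"
      using key rpos c0 by (intro mult_left_mono) (auto intro: prod_nonneg)
    finally show ?thesis by (simp add: c_def)
  qed
qed

lemma shift_back:
  fixes j t r :: nat
  assumes "r > 0" "t < r"
  shows "((j + t) mod r + (r - j mod r)) mod r = (t::nat)"
proof -
  have "((j + t) mod r + (r - j mod r)) mod r = (j + t + (r - j mod r)) mod r"
    by (simp add: mod_add_left_eq)
  also have "j + t + (r - j mod r) = t + r + (j - j mod r)"
    using mod_less_eq_dividend[of j r] mod_less_divisor[OF assms(1), of j] by linarith
  also have "(t + r + (j - j mod r)) mod r = t"
    using assms by (simp add: minus_mod_eq_mult_div)
  finally show ?thesis .
qed

lemma shift_fwd:
  fixes j k r :: nat
  assumes "r > 0" "k < r"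
  shows "(j + (k + (r - j mod r)) mod r) mod r = (k::nat)"
proof -
  have "(j + (k + (r - j mod r)) mod r) mod r = (j + (k + (r - j mod r))) mod r"
    by (simp add: mod_add_right_eq)
  also have "j + (k + (r - j mod r)) = k + r + (j - j mod r)"
    using mod_less_eq_dividend[of j r] mod_less_divisor[OF assms(1), of j] by linarith
  also have "(k + r + (j - j mod r)) mod r = k"
    using assms by (simp add: minus_mod_eq_mult_div)
  finally show ?thesis .
qed

lemma cyc_permutes:
  fixes r t :: nat
  assumes "r > 0"
  shows "(\<lambda>j. if j < r then (j + t) mod r else j) permutes {..<r}"
proof (rule bij_imp_permutes)
  have "bij_betw (\<lambda>j. (t + j) mod r) {..<r} {..<r}"
    by (rule bij_betwI[where g = "\<lambda>k. (k + (r - t mod r)) mod r"])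
       (use assms shift_back shift_fwd in auto)
  then show "bij_betw (\<lambda>j. if j < r then (j + t) mod r else j) {..<r} {..<r}"
    by (rule bij_betw_cong[THEN iffD1, rotated]) (auto simp: add.commute)
qed auto

lemma sh_in:
  assumes "\<And>k. k < r \<Longrightarrow> f k < r" "is \<in> index_tuples r n"
  shows "map (\<lambda>k. is ! f k) [0..<r] \<in> index_tuples r n"
proof -
  have len: "length is = r" and st: "set is \<subseteq> {..<n}" using assms(2) by (auto simp: index_tuples_def)
  have "is ! f k < n" if "k < r" for k
  proof -
    have "is ! f k \<in> set is" using assms(1)[OF that] len by simp
    then show ?thesis using st by blast
  qed
  then show ?thesis by (auto simp: index_tuples_def)
qed

lemma sh_comp:
  assumes "\<And>k. k < r \<Longrightarrow> f k < r \<and> g (f k) = k" "length is = r"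
  shows "map (\<lambda>k. (map (\<lambda>k. is ! g k) [0..<r]) ! f k) [0..<r] = is"
  by (rule nth_equalityI) (use assms in auto)

lemma sum_perm:
  fixes y :: "nat \<Rightarrow> nat \<Rightarrow> real"
  assumes sym: "symmetric_cubical r n A" and \<sigma>: "\<sigma> permutes {..<r}"
  shows "(\<Sum>is\<in>index_tuples r n. A is * (\<Prod>k<r. y k (is!k)))
       = (\<Sum>is\<in>index_tuples r n. A is * (\<Prod>j<r. y (\<sigma> j) (is!j)))"
proof -
  define \<tau> where "\<tau> = inv \<sigma>"
  have \<tau>: "\<tau> permutes {..<r}" unfolding \<tau>_def by (rule permutes_inv[OF \<sigma>])
  have s1: "\<sigma> k < r" if "k < r" for k using permutes_in_image[OF \<sigma>] that by auto
  have t1: "\<tau> k < r" if "k < r" for k using permutes_in_image[OF \<tau>] that by auto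
  have st: "\<sigma> (\<tau> k) = k" for k unfolding \<tau>_def using permutes_inverses[OF \<sigma>] by auto
  have ts: "\<tau> (\<sigma> k) = k" for k unfolding \<tau>_def using permutes_inverses[OF \<sigma>] by auto
  show ?thesis
  proof (rule sum.reindex_bij_witness[where j = "\<lambda>is. map (\<lambda>k. is ! \<sigma> k) [0..<r]"
                                         and i = "\<lambda>is. map (\<lambda>k. is ! \<tau> k) [0..<r]"])
    fix a assume a: "a \<in> index_tuples r n"
    show "map (\<lambda>k. map (\<lambda>k. a ! \<sigma> k) [0..<r] ! \<tau> k) [0..<r] = a"
      by (rule sh_comp) (use a t1 st in \<open>auto simp: index_tuples_def\<close>)
    show "map (\<lambda>k. a ! \<sigma> k) [0..<r] \<in> index_tuples r n" by (rule sh_in) (use a s1 in auto)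
    have "A (map (\<lambda>k. a ! \<sigma> k) [0..<r]) = A a"
      using sym a \<sigma> unfolding symmetric_cubical_def by blast
    moreover have "(\<Prod>j<r. y (\<sigma> j) (map (\<lambda>k. a ! \<sigma> k) [0..<r] ! j)) = (\<Prod>k<r. y k (a!k))"
    proof -
      have "(\<Prod>j<r. y (\<sigma> j) (map (\<lambda>k. a ! \<sigma> k) [0..<r] ! j)) = (\<Prod>j<r. y (\<sigma> j) (a ! \<sigma> j))"
        by (intro prod.cong) auto
      also have "\<dots> = (\<Prod>k<r. y k (a!k))"
        by (rule prod.reindex_bij_witness[where i = \<tau> and j = \<sigma>]) (use s1 t1 st ts in auto)
      finally show ?thesis .
    qed
    ultimately show "A (map (\<lambda>k. a ! \<sigma> k) [0..<r]) *
        (\<Prod>j<r. y (\<sigma> j) (map (\<lambda>k. a ! \<sigma> k) [0..<r] ! j)) = A a * (\<Prod>k<r. y k (a ! k))"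
      by simp
  next
    fix b assume b: "b \<in> index_tuples r n"
    show "map (\<lambda>k. map (\<lambda>k. b ! \<tau> k) [0..<r] ! \<sigma> k) [0..<r] = b"
      by (rule sh_comp) (use b s1 ts in \<open>auto simp: index_tuples_def\<close>)
    show "map (\<lambda>k. b ! \<tau> k) [0..<r] \<in> index_tuples r n" by (rule sh_in) (use b t1 in auto)
  qed
qed

lemma lp_sum_real:
  assumes "p > 0" "lp_norm_real p n x = 1"
  shows "(\<Sum>i<n. \<bar>x i\<bar> powr p) = 1"
proof -
  define S where "S = (\<Sum>i<n. \<bar>x i\<bar> powr p)"
  have S0: "S \<ge> 0" unfolding S_def by (simp add: sum_nonneg)
  have "S = (S powr (1/p)) powr p" using S0 assms by (simp add: powr_powr)
  also have "S powr (1/p) = 1" using assms by (simp add: S_def lp_norm_real_def)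
  finally show ?thesis by (simp add: S_def)
qed

lemma lp_sum_complex:
  assumes "p > 0" "lp_norm_complex p n x = 1"
  shows "(\<Sum>i<n. cmod (x i) powr p) = 1"
proof -
  define S where "S = (\<Sum>i<n. cmod (x i) powr p)"
  have S0: "S \<ge> 0" unfolding S_def by (simp add: sum_nonneg)
  have "S = (S powr (1/p)) powr p" using S0 assms by (simp add: powr_powr)
  also have "S powr (1/p) = 1" using assms by (simp add: S_def lp_norm_complex_def)
  finally show ?thesis by (simp add: S_def)
qed

lemma coord_le1:
  fixes v :: "nat \<Rightarrow> real"
  assumes "p > 0" "(\<Sum>i<n. v i powr p) = 1" "\<And>i. v i \<ge> 0" "i < n"
  shows "v i \<le> 1"
proof -
  have "v i powr p \<le> (\<Sum>i<n. v i powr p)"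
    by (rule member_le_sum) (use assms in auto)
  hence "v i powr p \<le> 1" using assms by simp
  hence "(v i powr p) powr (1/p) \<le> 1 powr (1/p)"
    by (intro powr_mono2) (use assms in auto)
  thus ?thesis using assms by (simp add: powr_powr)
qed

lemma key_bound:
  fixes A :: "nat list \<Rightarrow> real" and p :: real
  assumes r: "r \<ge> 1" and p: "p \<ge> real r" and sym: "symmetric_cubical r n A"
    and nn: "\<forall>is \<in> index_tuples r n. A is \<ge> 0"
    and xs: "\<forall>k<r. lp_norm_complex p n (xs k) = 1"
  shows "\<exists>z. lp_norm_real p n z = 1 \<and> cmod (linear_form r n A xs) \<le> poly_form r n A z"
proof -
  have rpos: "r > 0" using r by simp
  have ppos: "p > 0" using r p by linarith
  define y where "y k i = cmod (xs k i)" for k i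
  define z where "z i = ((\<Sum>k<r. y k i powr p) / r) powr (1/p)" for i
  let ?IT = "index_tuples r n"
  have fin: "finite ?IT"
  proof (rule finite_subset)
    show "?IT \<subseteq> {is. set is \<subseteq> {..<n} \<and> length is = r}" by (auto simp: index_tuples_def)
    show "finite {is. set is \<subseteq> {..<n} \<and> length is = r}" by (rule finite_lists_length_eq) simp
  qed
  have "cmod (linear_form r n A xs) \<le> (\<Sum>is\<in>?IT. cmod (complex_of_real (A is) * (\<Prod>k<r. cnj (xs k (is ! k)))))"
    unfolding linear_form_def by (rule norm_sum)
  also have "\<dots> = (\<Sum>is\<in>?IT. A is * (\<Prod>k<r. y k (is!k)))"
  proof (rule sum.cong[OF refl])
    fix "is" assume "is \<in> ?IT"
    then have "A is \<ge> 0" using nn by auto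
    then show "cmod (complex_of_real (A is) * (\<Prod>k<r. cnj (xs k (is ! k)))) = A is * (\<Prod>k<r. y k (is!k))"
      by (simp add: norm_mult prod_norm[symmetric] y_def)
  qed
  also have "\<dots> = (\<Sum>t<r. \<Sum>is\<in>?IT. A is * (\<Prod>j<r. y ((j+t) mod r) (is!j))) / r"
  proof -
    have eq: "(\<Sum>is\<in>?IT. A is * (\<Prod>k<r. y k (is!k))) = (\<Sum>is\<in>?IT. A is * (\<Prod>j<r. y ((j+t) mod r) (is!j)))" for t
    proof -
      have "(\<Sum>is\<in>?IT. A is * (\<Prod>k<r. y k (is!k))) = (\<Sum>is\<in>?IT. A is * (\<Prod>j<r. y ((\<lambda>j. if j < r then (j + t) mod r else j) j) (is!j)))"
        by (rule sum_perm[OF sym cyc_permutes[OF rpos]])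
      also have "\<dots> = (\<Sum>is\<in>?IT. A is * (\<Prod>j<r. y ((j+t) mod r) (is!j)))"
        by (intro sum.cong refl arg_cong[where f="\<lambda>x. A _ * x"] prod.cong) auto
      finally show ?thesis .
    qed
    have "(\<Sum>t<r. \<Sum>is\<in>?IT. A is * (\<Prod>j<r. y ((j+t) mod r) (is!j))) = (\<Sum>t<r. \<Sum>is\<in>?IT. A is * (\<Prod>k<r. y k (is!k)))"
      using eq by simp
    also have "\<dots> = r * (\<Sum>is\<in>?IT. A is * (\<Prod>k<r. y k (is!k)))" by simp
    finally show ?thesis using rpos by simp
  qed
  also have "\<dots> = (\<Sum>is\<in>?IT. A is * ((\<Sum>t<r. \<Prod>j<r. y ((j+t) mod r) (is!j)) / r))"
  proof -
    have "(\<Sum>t<r. \<Sum>is\<in>?IT. A is * (\<Prod>j<r. y ((j+t) mod r) (is!j)))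
        = (\<Sum>is\<in>?IT. \<Sum>t<r. A is * (\<Prod>j<r. y ((j+t) mod r) (is!j)))"
      by (rule sum.swap)
    also have "\<dots> = (\<Sum>is\<in>?IT. A is * (\<Sum>t<r. \<Prod>j<r. y ((j+t) mod r) (is!j)))"
      by (simp add: sum_distrib_left)
    finally have E: "(\<Sum>t<r. \<Sum>is\<in>?IT. A is * (\<Prod>j<r. y ((j+t) mod r) (is!j)))
        = (\<Sum>is\<in>?IT. A is * (\<Sum>t<r. \<Prod>j<r. y ((j+t) mod r) (is!j)))" .
    show ?thesis unfolding E by (subst sum_divide_distrib) simp
  qed
  also have "\<dots> \<le> (\<Sum>is\<in>?IT. A is * (\<Prod>j<r. z (is!j)))"
  proof (rule sum_mono, rule mult_left_mono)
    fix "is" assume "is \<in> ?IT"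
    then show "A is \<ge> 0" using nn by auto
    show "(\<Sum>t<r. \<Prod>j<r. y ((j+t) mod r) (is!j)) / r \<le> (\<Prod>j<r. z (is!j))"
      unfolding z_def using core_ineq[OF r p, of "\<lambda>k j. y k (is!j)"] by (simp add: y_def)
  qed
  also have "\<dots> = poly_form r n A z" by (simp add: poly_form_def)
  finally have bound: "cmod (linear_form r n A xs) \<le> poly_form r n A z" .
  have z0: "z i \<ge> 0" for i by (simp add: z_def)
  have zp: "\<bar>z i\<bar> powr p = (\<Sum>k<r. y k i powr p) / r" for i
  proof -
    have "(\<Sum>k<r. y k i powr p) \<ge> 0" by (simp add: sum_nonneg)
    then show ?thesis using ppos z0[of i] by (simp add: z_def powr_powr abs_of_nonneg)
  qed
  have "(\<Sum>i<n. \<bar>z i\<bar> powr p) = (\<Sum>k<r. \<Sum>i<n. y k i powr p) / r"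
    by (simp add: zp sum_divide_distrib[symmetric] sum.swap[of _ "{..<n}"])
  also have "\<dots> = (\<Sum>k<r. (1::real)) / r"
    using lp_sum_complex[OF ppos] xs by (simp add: y_def)
  also have "\<dots> = 1" using rpos by simp
  finally have "lp_norm_real p n z = 1" by (simp add: lp_norm_real_def)
  with bound show ?thesis by blast
qed

lemma poly_bound:
  fixes A :: "nat list \<Rightarrow> real" and p :: real
  assumes ppos: "p > 0" and nn: "\<forall>is \<in> index_tuples r n. A is \<ge> 0"
    and x: "lp_norm_real p n x = 1"
  shows "\<bar>poly_form r n A x\<bar> \<le> (\<Sum>is\<in>index_tuples r n. A is)"
proof -
  have c1: "\<bar>x i\<bar> \<le> 1" if "i < n" for i
    using coord_le1[OF ppos lp_sum_real[OF ppos x], of i] that by auto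
  have "\<bar>poly_form r n A x\<bar> \<le> (\<Sum>is\<in>index_tuples r n. \<bar>A is * (\<Prod>k<r. x (is!k))\<bar>)"
    unfolding poly_form_def by (rule sum_abs)
  also have "\<dots> \<le> (\<Sum>is\<in>index_tuples r n. A is)"
  proof (rule sum_mono)
    fix "is" assume i: "is \<in> index_tuples r n"
    have "(\<Prod>k<r. \<bar>x (is!k)\<bar>) \<le> 1"
    proof (rule prod_le_1)
      fix k assume "k \<in> {..<r}"
      then have "is ! k \<in> set is" using i by (auto simp: index_tuples_def)
      then have "is ! k < n" using i by (auto simp: index_tuples_def)
      then show "0 \<le> \<bar>x (is!k)\<bar> \<and> \<bar>x (is!k)\<bar> \<le> 1" using c1 by auto
    qed
    then have "A is * (\<Prod>k<r. \<bar>x (is!k)\<bar>) \<le> A is * 1"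
      using nn i by (intro mult_left_mono) auto
    then show "\<bar>A is * (\<Prod>k<r. x (is!k))\<bar> \<le> A is"
      using nn i by (simp add: abs_mult abs_prod)
  qed
  finally show ?thesis .
qed

theorem theorem2:
  fixes r n :: nat and p :: real and A :: "nat list \<Rightarrow> real"
  assumes "r \<ge> 2" and "n \<ge> 1"
    and "symmetric_cubical r n A"
    and "\<forall>is \<in> index_tuples r n. A is \<ge> 0"
    and "p \<ge> real r"
  shows "eta p r n A = spectral_norm p r n A"
proof -
  have r1: "r \<ge> 1" using assms(1) by simp
  have ppos: "p > 0" using assms(1,5) by linarith
  define S where "S = {x. lp_norm_real p n x = 1}"
  define T where "T = {xs. \<forall>k<r. lp_norm_complex p n (xs k) = 1}"
  define f where "f x = \<bar>poly_form r n A x\<bar>" for x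
  define g where "g xs = cmod (linear_form r n A xs)" for xs
  define B where "B = (\<Sum>is\<in>index_tuples r n. A is)"
  define x0 :: "nat \<Rightarrow> real" where "x0 i = (if i = 0 then 1 else 0)" for i
  have x0S: "x0 \<in> S"
  proof -
    have "(\<Sum>i<n. \<bar>x0 i\<bar> powr p) = (\<Sum>i<n. if i = 0 then 1 else 0)"
      by (intro sum.cong) (auto simp: x0_def)
    also have "\<dots> = 1" using assms(2) by simp
    finally show ?thesis by (simp add: S_def lp_norm_real_def)
  qed
  have emb: "(\<lambda>k i. complex_of_real (x i)) \<in> T \<and> g (\<lambda>k i. complex_of_real (x i)) = f x" if "x \<in> S" for x
  proof
    have "lp_norm_complex p n (\<lambda>i. complex_of_real (x i)) = lp_norm_real p n x"
      by (simp add: lp_norm_complex_def lp_norm_real_def)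
    then show "(\<lambda>k i. complex_of_real (x i)) \<in> T" using that by (simp add: S_def T_def)
    have "complex_of_real (poly_form r n A x) = linear_form r n A (\<lambda>k i. complex_of_real (x i))"
      by (simp add: poly_form_def linear_form_def)
    then show "g (\<lambda>k i. complex_of_real (x i)) = f x"
      by (metis g_def f_def norm_of_real)
  qed
  have fB: "f x \<le> B" if "x \<in> S" for x
    using poly_bound[OF ppos assms(4)] that by (simp add: f_def B_def S_def)
  have gS: "\<exists>z\<in>S. g xs \<le> f z" if xsT: "xs \<in> T" for xs
  proof -
    obtain z where z: "lp_norm_real p n z = 1" "cmod (linear_form r n A xs) \<le> poly_form r n A z"
      using key_bound[OF r1 assms(5) assms(3) assms(4), of xs] xsT by (auto simp: T_def)
    then have "g xs \<le> f z" by (simp add: g_def f_def)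
    then show ?thesis using z(1) by (auto simp: S_def)
  qed
  have bdf: "bdd_above (f ` S)" by (rule bdd_aboveI2[where M = B]) (rule fB)
  have bdg: "bdd_above (g ` T)"
  proof (rule bdd_aboveI2)
    fix xs assume "xs \<in> T"
    then obtain z where "z \<in> S" "g xs \<le> f z" using gS by blast
    then show "g xs \<le> B" using fB by force
  qed
  have Sne: "S \<noteq> {}" using x0S by auto
  have Tne: "T \<noteq> {}" using emb[OF x0S] by auto
  have "(SUP x\<in>S. f x) \<le> (SUP xs\<in>T. g xs)"
    by (rule cSUP_mono[OF Sne bdg]) (use emb in force)
  moreover have "(SUP xs\<in>T. g xs) \<le> (SUP x\<in>S. f x)"
    by (rule cSUP_mono[OF Tne bdf]) (use gS in blast)
  ultimately have "(SUP x\<in>S. f x) = (SUP xs\<in>T. g xs)" by (rule antisym)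
  then show ?thesis
    unfolding eta_def spectral_norm_def S_def T_def f_def g_def .
qed

end
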